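(* It holds that $\Gamma(\mathcal{C}^I)\subseteq\mathcal{F}$.
   Context: Fix $I\in\mathbb{N}$. $\mathcal{C}=\{f\in C(\mathbb{R}_+,\mathbb{R}_+):f(0)=0,f\text{ non-decreasing}\}$, $\mathcal{C}^\uparrow=\{f\in\mathcal{C}:f\text{ strictly increasing},\lim_{u\to\infty}f(u)=\infty\}$. For $\psi\in\mathcal{C}^I$, $\phi_i(u):=u-\sum_{j=1}^I2(i\wedge j)\psi_j(u)$, and $\mathcal{F}:=\{\psi\in\mathcal{C}^I:\phi_I\in\mathcal{C}^\uparrow\}$. For $\bar\psi\in\mathcal{C}^I$, $\gamma_I(z):=z$ and $\gamma_i(z):=z+\sum_{j>i}2(j-i)\bar\psi_j(\gamma_j(z))$ for $i=I-1,\dots,0$ (each $\gamma_i\in\mathcal{C}^\uparrow$, so $\gamma_0^{-1}$ exists); $\Gamma(\bar\psi):=(\bar\psi_i\circ\gamma_i\circ\gamma_0^{-1})_{i=1}^I$. *)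

theory Defs
  imports "HOL-Analysis.Analysis"
begin

text \<open>Functions R_+ -> R_+ are represented as real => real; only values on {0..} matter.\<close>

definition classC :: "(real \<Rightarrow> real) set" where
  "classC = {f. continuous_on {0..} f \<and> f ` {0..} \<subseteq> {0..} \<and> f 0 = 0 \<and> mono_on {0..} f}"

definition classC_up :: "(real \<Rightarrow> real) set" where
  "classC_up = {f. f \<in> classC \<and> strict_mono_on {0..} f \<and> filterlim f at_top at_top}"

definition classC_pow :: "nat \<Rightarrow> (nat \<Rightarrow> real \<Rightarrow> real) set" where
  "classC_pow I = {\<psi>. \<forall>i\<in>{1..I}. \<psi> i \<in> classC}"

definition phi :: "nat \<Rightarrow> (nat \<Rightarrow> real \<Rightarrow> real) \<Rightarrow> nat \<Rightarrow> real \<Rightarrow> real" where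
  "phi I \<psi> i u = u - (\<Sum>j=1..I. 2 * real (min i j) * \<psi> j u)"

definition classF :: "nat \<Rightarrow> (nat \<Rightarrow> real \<Rightarrow> real) set" where
  "classF I = {\<psi>. \<psi> \<in> classC_pow I \<and> phi I \<psi> I \<in> classC_up}"

function gamma :: "nat \<Rightarrow> (nat \<Rightarrow> real \<Rightarrow> real) \<Rightarrow> nat \<Rightarrow> real \<Rightarrow> real" where
  "gamma I \<psi> i z = z + (\<Sum>j\<in>{i<..I}. 2 * real (j - i) * \<psi> j (gamma I \<psi> j z))"
  by pat_completeness auto
termination
  by (relation "Wellfounded.measure (\<lambda>(I, \<psi>, i, z). I - i)") auto

definition Gamma :: "nat \<Rightarrow> (nat \<Rightarrow> real \<Rightarrow> real) \<Rightarrow> nat \<Rightarrow> real \<Rightarrow> real" where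
  "Gamma I \<psi> i = \<psi> i \<circ> gamma I \<psi> i \<circ> the_inv_into {0..} (gamma I \<psi> 0)"

end

theory Submission
  imports Defs
begin

declare gamma.simps[simp del]

lemma classC_comp:
  assumes f: "f \<in> classC" and g: "g \<in> classC"
  shows "(\<lambda>z. f (g z)) \<in> classC"
proof -
  have gi: "g ` {0..} \<subseteq> {0..}" using g by (simp add: classC_def)
  have "continuous_on {0..} (\<lambda>z. f (g z))"
    using continuous_on_compose2[of "{0..}" f "{0..}" g] f g gi by (auto simp: classC_def)
  moreover have "(\<lambda>z. f (g z)) ` {0..} \<subseteq> {0..}" using f gi by (auto simp: classC_def)
  moreover have "f (g 0) = 0" using f g by (simp add: classC_def)
  moreover have "mono_on {0..} (\<lambda>z. f (g z))"
  proof (rule mono_onI)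
    fix r s :: real assume "r \<in> {0..}" "s \<in> {0..}" "r \<le> s"
    then have "g r \<le> g s" "g r \<in> {0..}" "g s \<in> {0..}" using g gi by (auto simp: classC_def mono_on_def image_subset_iff)
    then show "f (g r) \<le> f (g s)" using f by (auto simp: classC_def mono_on_def)
  qed
  ultimately show ?thesis by (simp add: classC_def)
qed

lemma classC_sum:
  assumes "finite K" "\<And>k. k \<in> K \<Longrightarrow> f k \<in> classC" "\<And>k. k \<in> K \<Longrightarrow> c k \<ge> 0"
  shows "(\<lambda>z. \<Sum>k\<in>K. c k * f k z) \<in> classC"
proof -
  have "continuous_on {0..} (\<lambda>z. \<Sum>k\<in>K. c k * f k z)"
    using assms by (intro continuous_on_sum continuous_on_mult_left) (auto simp: classC_def)
  moreover have "(\<lambda>z. \<Sum>k\<in>K. c k * f k z) ` {0..} \<subseteq> {0..}"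
    using assms by (force simp: classC_def intro!: sum_nonneg)
  moreover have "(\<Sum>k\<in>K. c k * f k 0) = 0" using assms by (simp add: classC_def)
  moreover have "mono_on {0..} (\<lambda>z. \<Sum>k\<in>K. c k * f k z)"
  proof (rule mono_onI)
    fix r s :: real assume "r \<in> {0..}" "s \<in> {0..}" "r \<le> s"
    then show "(\<Sum>k\<in>K. c k * f k r) \<le> (\<Sum>k\<in>K. c k * f k s)"
      using assms by (intro sum_mono mult_left_mono) (auto simp: classC_def mono_on_def)
  qed
  ultimately show ?thesis by (simp add: classC_def)
qed

lemma id_plus:
  assumes S: "S \<in> classC"
  shows "(\<lambda>z. z + S z) \<in> classC" "\<And>z. z \<ge> 0 \<Longrightarrow> z \<le> z + S z"
    "strict_mono_on {0..} (\<lambda>z. z + S z)"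
proof -
  have "continuous_on {0..} (\<lambda>z. z + S z)"
    using S by (intro continuous_intros) (auto simp: classC_def)
  moreover have "(\<lambda>z. z + S z) ` {0..} \<subseteq> {0..}" using S by (force simp: classC_def)
  moreover have "0 + S 0 = 0" using S by (simp add: classC_def)
  moreover have "mono_on {0..} (\<lambda>z. z + S z)"
    using S by (intro mono_onI) (auto simp: classC_def mono_on_def intro: add_mono)
  ultimately show "(\<lambda>z. z + S z) \<in> classC" by (simp add: classC_def)
  show "\<And>z. z \<ge> 0 \<Longrightarrow> z \<le> z + S z" using S by (force simp: classC_def)
  show "strict_mono_on {0..} (\<lambda>z. z + S z)"
    using S by (intro strict_mono_onI) (auto simp: classC_def mono_on_def intro: add_less_le_mono)
qed

lemma gamma_props:
  assumes psi: "\<psi> \<in> classC_pow I"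
  shows "gamma I \<psi> i \<in> classC \<and> (\<forall>z\<ge>0. z \<le> gamma I \<psi> i z) \<and> strict_mono_on {0..} (gamma I \<psi> i)"
proof (induction "I - i" arbitrary: i rule: less_induct)
  case less
  define S where "S = (\<lambda>z. \<Sum>j\<in>{i<..I}. 2 * real (j - i) * (\<lambda>z. \<psi> j (gamma I \<psi> j z)) z)"
  have eq: "gamma I \<psi> i = (\<lambda>z. z + S z)"
    by (rule ext, subst gamma.simps) (simp add: S_def)
  have "S \<in> classC" unfolding S_def
  proof (rule classC_sum)
    fix j assume j: "j \<in> {i<..I}"
    then have "I - j < I - i" by auto
    then have g: "gamma I \<psi> j \<in> classC" using less by blast
    have "\<psi> j \<in> classC" using psi j by (auto simp: classC_pow_def)
    then show "(\<lambda>z. \<psi> j (gamma I \<psi> j z)) \<in> classC" using g by (rule classC_comp)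
  qed auto
  then show ?case unfolding eq using id_plus[of S] by auto
qed

lemma inverse_classC_up:
  assumes f: "f \<in> classC" and ge: "\<And>z. z \<ge> 0 \<Longrightarrow> z \<le> f z" and sm: "strict_mono_on {0..} f"
  defines "h \<equiv> the_inv_into {0..} f"
  shows "f ` {0..} = {0..}" "\<And>u. u \<ge> 0 \<Longrightarrow> f (h u) = u" "\<And>u. u \<ge> 0 \<Longrightarrow> h u \<ge> 0"
    "h \<in> classC_up"
proof -
  have inj: "inj_on f {0..}" using sm by (rule strict_mono_on_imp_inj_on)
  have cf: "continuous_on {0..} f" and f0: "f 0 = 0" and fi: "f ` {0..} \<subseteq> {0..}"
    using f by (auto simp: classC_def)
  have surj: "u \<in> f ` {0..}" if "u \<ge> 0" for u :: real
  proof -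
    have "continuous_on {0..u} f" using cf by (rule continuous_on_subset) auto
    moreover have "f 0 \<le> u" "u \<le> f u" "0 \<le> u" using f0 ge[of u] that by auto
    ultimately have "\<exists>x. 0 \<le> x \<and> x \<le> u \<and> f x = u" using IVT'[of f 0 u u] by blast
    then obtain x where "0 \<le> x" "x \<le> u" "f x = u" by blast
    then show ?thesis by auto
  qed
  show img: "f ` {0..} = {0..}" using fi surj by auto
  show fh: "\<And>u. u \<ge> 0 \<Longrightarrow> f (h u) = u" unfolding h_def using inj surj by (simp add: f_the_inv_into_f)
  show hpos: "\<And>u. u \<ge> 0 \<Longrightarrow> h u \<ge> 0" unfolding h_def
    using inj surj the_inv_into_into[of f "{0..}" _ "{0..}"] by auto
  have hf: "\<And>z. z \<ge> 0 \<Longrightarrow> h (f z) = z" unfolding h_def using inj by (simp add: the_inv_into_f_f)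
  have hsm: "strict_mono_on {0..} h"
  proof (rule strict_mono_onI)
    fix r s :: real assume "r \<in> {0..}" "s \<in> {0..}" "r < s"
    show "h r < h s"
    proof (rule ccontr)
      assume "\<not> h r < h s"
      then have "h s \<le> h r" by simp
      moreover have "h r \<ge> 0" "h s \<ge> 0" using hpos \<open>r \<in> {0..}\<close> \<open>s \<in> {0..}\<close> by auto
      ultimately have "f (h s) \<le> f (h r)" using f by (auto simp: classC_def mono_on_def)
      then have "s \<le> r" using fh \<open>r \<in> {0..}\<close> \<open>s \<in> {0..}\<close> by simp
      then show False using \<open>r < s\<close> by simp
    qed
  qed
  have hmono: "mono_on {0..} h" using hsm by (rule strict_mono_on_imp_mono_on)
  have h0: "h 0 = 0" using hf[of 0] f0 by simp
  have hcont: "continuous_on {0..} h"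
  proof (subst continuous_on_eq_continuous_within, intro ballI)
    fix u :: real assume u: "u \<in> {0..}"
    define c where "c = h u + 1"
    have c0: "c \<ge> 0" using hpos u c_def by auto
    have cK: "continuous_on (f ` {0..c}) (the_inv_into {0..c} f)"
      by (rule continuous_on_inv_into) (auto intro: continuous_on_subset[OF cf] inj_on_subset[OF inj])
    have fc: "f ` {0..c} = {0..f c}"
    proof
      show "f ` {0..c} \<subseteq> {0..f c}" using f c0 by (auto simp: classC_def mono_on_def image_subset_iff)
      show "{0..f c} \<subseteq> f ` {0..c}"
      proof
        fix v assume v: "v \<in> {0..f c}"
        have "f (h v) = v" "h v \<ge> 0" using fh hpos v by auto
        moreover have "h v \<le> c"
        proof -
          have "f c \<ge> 0" using fi c0 by auto
          then have "h v \<le> h (f c)" using hmono v by (auto simp: mono_on_def)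
          then show ?thesis using hf[of c] c0 by simp
        qed
        ultimately show "v \<in> f ` {0..c}" by (metis atLeastAtMost_iff image_eqI)
      qed
    qed
    have eqh: "the_inv_into {0..c} f v = h v" if vv: "v \<in> {0..f c}" for v
    proof -
      have "v \<in> f ` {0..c}" using vv fc by simp
      then obtain x where x: "x \<in> {0..c}" "v = f x" by auto
      then have "the_inv_into {0..c} f v = x"
        using the_inv_into_f_f[OF inj_on_subset[OF inj]] by auto
      moreover have "h v = x" using hf x by auto
      ultimately show ?thesis by simp
    qed
    have "continuous_on {0..f c} (the_inv_into {0..c} f)" using cK fc by simp
    moreover have "continuous_on {0..f c} (the_inv_into {0..c} f) = continuous_on {0..f c} h"
      by (rule continuous_on_cong) (simp_all add: eqh)
    ultimately have "continuous_on {0..f c} h" by simp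
    moreover have uc: "u < f c"
    proof -
      have "h u < c" by (simp add: c_def)
      then have "f (h u) < f c" using sm hpos u c0 by (auto intro: strict_mono_onD)
      then show ?thesis using fh u by auto
    qed
    ultimately have "continuous (at u within {0..f c}) h"
      using u unfolding continuous_on_eq_continuous_within by simp
    moreover have "at u within {0..} = at u within {0..f c}"
      by (rule at_within_nhd[where S="{..<f c}"]) (use uc in auto)
    ultimately show "continuous (at u within {0..}) h" by simp
  qed
  have hlim: "filterlim h at_top at_top"
  proof (subst filterlim_at_top, intro allI)
    fix Z :: real
    show "eventually (\<lambda>x. Z \<le> h x) at_top"
    proof (rule eventually_at_top_linorder[THEN iffD2], intro exI allI impI)
      fix x assume x: "f (max Z 0) \<le> x"
      have "f (max Z 0) \<ge> 0" using fi by (auto simp: image_subset_iff)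
      then have "h (f (max Z 0)) \<le> h x" using hmono x by (auto simp: mono_on_def)
      then show "Z \<le> h x" using hf[of "max Z 0"] by auto
    qed
  qed
  show "h \<in> classC_up" using hcont hpos h0 hmono hsm hlim by (auto simp: classC_up_def classC_def)
qed

lemma classC_up_cong:
  assumes "h \<in> classC_up" "\<And>u. u \<ge> 0 \<Longrightarrow> f u = h u"
  shows "f \<in> classC_up"
proof -
  have c: "continuous_on {0..} f" using assms continuous_on_cong[of "{0..}" "{0..}" f h]
    by (auto simp: classC_up_def classC_def)
  have "f ` {0..} \<subseteq> {0..}" using assms by (auto simp: classC_up_def classC_def image_subset_iff)
  moreover have "f 0 = 0" using assms by (auto simp: classC_up_def classC_def)
  moreover have "mono_on {0..} f" using assms by (auto simp: classC_up_def classC_def mono_on_def)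
  moreover have "strict_mono_on {0..} f" using assms by (auto simp: classC_up_def strict_mono_on_def)
  moreover have "filterlim f at_top at_top"
  proof -
    have "eventually (\<lambda>u. h u = f u) at_top"
      using eventually_ge_at_top[of "0::real"] by eventually_elim (use assms in auto)
    then show ?thesis using assms filterlim_cong[OF refl refl, of h f at_top] by (auto simp: classC_up_def)
  qed
  ultimately show ?thesis using c by (simp add: classC_up_def classC_def)
qed

theorem proposition3p6:
  fixes I :: nat
  shows "Gamma I ` classC_pow I \<subseteq> classF I"
proof
  fix \<psi>' assume "\<psi>' \<in> Gamma I ` classC_pow I"
  then obtain \<psi> where psi: "\<psi> \<in> classC_pow I" and eq: "\<psi>' = Gamma I \<psi>" by auto
  define h where "h = the_inv_into {0..} (gamma I \<psi> 0)"
  have g0: "gamma I \<psi> 0 \<in> classC" "\<And>z. z \<ge> 0 \<Longrightarrow> z \<le> gamma I \<psi> 0 z"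
    "strict_mono_on {0..} (gamma I \<psi> 0)" using gamma_props[OF psi, of 0] by auto
  note inv = inverse_classC_up[OF g0, folded h_def]
  have hC: "h \<in> classC" using inv(4) by (simp add: classC_up_def)
  have G: "Gamma I \<psi> i = (\<lambda>z. \<psi> i (gamma I \<psi> i (h z)))" for i
    by (simp add: Gamma_def h_def o_def)
  have "Gamma I \<psi> i \<in> classC" if i: "i \<in> {1..I}" for i
  proof -
    have "\<psi> i \<in> classC" using psi i by (auto simp: classC_pow_def)
    moreover have "(\<lambda>z. gamma I \<psi> i (h z)) \<in> classC"
      using classC_comp[OF _ hC] gamma_props[OF psi, of i] by blast
    ultimately show ?thesis unfolding G by (rule classC_comp)
  qed
  then have pow: "\<psi>' \<in> classC_pow I" using eq by (simp add: classC_pow_def)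
  have ph: "phi I \<psi>' I u = h u" if u: "u \<ge> 0" for u
  proof -
    have "u = gamma I \<psi> 0 (h u)" using inv(2) u by simp
    also have "\<dots> = h u + (\<Sum>j\<in>{0<..I}. 2 * real (j - 0) * \<psi> j (gamma I \<psi> j (h u)))"
      by (subst gamma.simps) simp
    also have "{0<..I} = {1..I}" by auto
    also have "(\<Sum>j\<in>{1..I}. 2 * real (j - 0) * \<psi> j (gamma I \<psi> j (h u)))
        = (\<Sum>j=1..I. 2 * real (min I j) * \<psi>' j u)"
      by (rule sum.cong) (auto simp: eq G min_def)
    finally show ?thesis by (simp add: phi_def)
  qed
  have "phi I \<psi>' I \<in> classC_up" by (rule classC_up_cong[OF inv(4) ph])
  then show "\<psi>' \<in> classF I" using pow by (simp add: classF_def)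
qed

end
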